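(* Let $f$ be a positive even integer and let $G(\mathcal V,\mathcal E)$ be a 2-clique network (for this $f$). Then for every partition $A,B,F$ of $\mathcal V$ with $A,B$ non-empty and $|F|\le f$, either $A \Rightarrow_{\mathcal V - F} B$ or $B \Rightarrow_{\mathcal V - F} A$.
   Context: A simple directed graph $G(\mathcal V,\mathcal E)$ with $n=6f+2$ nodes, $f$ a positive even integer, is a 2-clique network if: $\mathcal V$ is the disjoint union of $K_1=\{u_1,\dots,u_{3f+1}\}$ and $K_2=\{w_1,\dots,w_{3f+1}\}$; $(u_i,u_j)\in\mathcal E$ and $(w_i,w_j)\in\mathcal E$ for all $1\le i,j\le 3f+1$, $i\ne j$; $(u_i,w_i)\in\mathcal E$ for $1\le i\le \frac{3f}{2}$ and for $i=3f+1$; and $(w_i,u_i)\in\mathcal E$ for $\frac{3f}{2}+1\le i\le 3f$ and for $i=3f+1$. An $(X,y)$-path is a directed path from some node of $X$ to the node $y\notin X$; it excludes $F$ if it contains no node of $F$; $(X,y)$-paths are disjoint if they pairwise share only $y$. For pairwise disjoint $X,Y,F\subseteq\mathcal V$ with $|F|\le f$, $X \Rightarrow_{\mathcal V - F} Y$ means: $Y=\emptyset$, or every $y\in Y$ has at least $f+1$ pairwise disjoint $(X,y)$-paths excluding $F$. *)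

theory Defs
  imports Main
begin

definition two_clique_network ::
  "nat \<Rightarrow> 'a set \<Rightarrow> ('a \<times> 'a) set \<Rightarrow> (nat \<Rightarrow> 'a) \<Rightarrow> (nat \<Rightarrow> 'a) \<Rightarrow> bool" where
  "two_clique_network f V E u w \<longleftrightarrow>
     inj_on u {1..3*f+1} \<and> inj_on w {1..3*f+1} \<and>
     u ` {1..3*f+1} \<inter> w ` {1..3*f+1} = {} \<and>
     V = u ` {1..3*f+1} \<union> w ` {1..3*f+1} \<and>
     E = {(u i, u j) | i j. i \<in> {1..3*f+1} \<and> j \<in> {1..3*f+1} \<and> i \<noteq> j}
       \<union> {(w i, w j) | i j. i \<in> {1..3*f+1} \<and> j \<in> {1..3*f+1} \<and> i \<noteq> j}
       \<union> {(u i, w i) | i. (1 \<le> i \<and> i \<le> 3*f div 2) \<or> i = 3*f+1}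
       \<union> {(w i, u i) | i. (3*f div 2 + 1 \<le> i \<and> i \<le> 3*f) \<or> i = 3*f+1}"

definition dpath :: "('a \<times> 'a) set \<Rightarrow> 'a list \<Rightarrow> bool" where
  "dpath E p \<longleftrightarrow> p \<noteq> [] \<and> distinct p \<and> (\<forall>i. Suc i < length p \<longrightarrow> (p ! i, p ! Suc i) \<in> E)"

definition XY_path :: "('a \<times> 'a) set \<Rightarrow> 'a set \<Rightarrow> 'a \<Rightarrow> 'a list \<Rightarrow> bool" where
  "XY_path E X y p \<longleftrightarrow> y \<notin> X \<and> dpath E p \<and> hd p \<in> X \<and> last p = y"

text \<open>X \<Rightarrow>_{V-F} Y: Y empty, or every y in Y has at least f+1 pairwise disjoint
  (X,y)-paths excluding F (disjoint = pairwise sharing only y).\<close>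
definition reaches ::
  "nat \<Rightarrow> ('a \<times> 'a) set \<Rightarrow> 'a set \<Rightarrow> 'a set \<Rightarrow> 'a set \<Rightarrow> bool" where
  "reaches f E F X Y \<longleftrightarrow> Y = {} \<or>
     (\<forall>y\<in>Y. \<exists>P. finite P \<and> card P \<ge> f + 1 \<and>
        (\<forall>p\<in>P. XY_path E X y p \<and> set p \<inter> F = {}) \<and>
        (\<forall>p\<in>P. \<forall>q\<in>P. p \<noteq> q \<longrightarrow> set p \<inter> set q = {y}))"

end

theory Submission imports Defs begin

lemma dpath_single[simp]: "dpath E [x]"
  by (simp add: dpath_def)

lemma dpath_Cons2[simp]:
  "dpath E (x # y # r) \<longleftrightarrow> (x,y) \<in> E \<and> x \<notin> set (y # r) \<and> dpath E (y # r)"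
proof -
  have "(\<forall>i. Suc i < length (x#y#r) \<longrightarrow> ((x#y#r) ! i, (x#y#r) ! Suc i) \<in> E) \<longleftrightarrow>
        (x,y) \<in> E \<and> (\<forall>i. Suc i < length (y#r) \<longrightarrow> ((y#r) ! i, (y#r) ! Suc i) \<in> E)"
    (is "?L \<longleftrightarrow> ?R")
  proof
    assume ?L
    then show ?R by (metis Suc_less_eq length_Cons nth_Cons_0 nth_Cons_Suc zero_less_Suc)
  next
    assume R: ?R
    show ?L
    proof (intro allI impI)
      fix i assume "Suc i < length (x#y#r)"
      then show "((x#y#r) ! i, (x#y#r) ! Suc i) \<in> E"
        using R by (cases i) auto
    qed
  qed
  then show ?thesis unfolding dpath_def by auto
qed

definition good :: "nat \<Rightarrow> ('a \<times> 'a) set \<Rightarrow> 'a set \<Rightarrow> 'a set \<Rightarrow> 'a \<Rightarrow> bool" where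
  "good f E F X y \<longleftrightarrow> (\<exists>P. finite P \<and> card P \<ge> f + 1 \<and>
        (\<forall>p\<in>P. XY_path E X y p \<and> set p \<inter> F = {}) \<and>
        (\<forall>p\<in>P. \<forall>q\<in>P. p \<noteq> q \<longrightarrow> set p \<inter> set q = {y}))"

lemma within:
  assumes EK: "\<forall>x\<in>K. \<forall>z\<in>K. x \<noteq> z \<longrightarrow> (x,z) \<in> E"
    and y: "y \<in> K" "y \<notin> X" "y \<notin> F" and XF: "X \<inter> F = {}"
    and XK: "card (X \<inter> K) \<ge> f + 1"
  shows "good f E F X y"
proof -
  have fin: "finite (X \<inter> K)" using XK by (cases "finite (X \<inter> K)") auto
  let ?P = "(\<lambda>x. [x,y]) ` (X \<inter> K)"
  have "inj_on (\<lambda>x. [x,y]) (X \<inter> K)" by (auto simp: inj_on_def)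
  then have "card ?P = card (X \<inter> K)" by (rule card_image)
  moreover have "\<forall>p\<in>?P. XY_path E X y p \<and> set p \<inter> F = {}"
    using EK y XF by (auto simp: XY_path_def)
  moreover have "\<forall>p\<in>?P. \<forall>q\<in>?P. p \<noteq> q \<longrightarrow> set p \<inter> set q = {y}"
    using y by auto
  ultimately show ?thesis unfolding good_def using fin XK
    by (metis finite_imageI)
qed

lemma cross:
  assumes KL: "K \<inter> L = {}"
    and EK: "\<forall>x\<in>K. \<forall>z\<in>K. x \<noteq> z \<longrightarrow> (x,z) \<in> E"
    and EL: "\<forall>x\<in>L. \<forall>z\<in>L. x \<noteq> z \<longrightarrow> (x,z) \<in> E"
    and D: "finite D" "card D \<ge> f + 1" "inj_on p D" "inj_on q D"
    and pq: "\<forall>i\<in>D. p i \<in> K \<and> p i \<notin> F \<and> q i \<in> L \<and> q i \<notin> F \<and> (p i, q i) \<in> E"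
    and y: "y \<in> L" "y \<notin> X" "y \<notin> F" and XF: "X \<inter> F = {}"
    and XK: "card (X \<inter> K) \<ge> f + 1"
  shows "good f E F X y"
proof -
  have fin: "finite (X \<inter> K)" using XK by (cases "finite (X \<inter> K)") auto
  obtain D' where D': "D' \<subseteq> D" "card D' = f + 1" "finite D'"
    using obtain_subset_with_card_n[OF D(2)] by metis
  define S where "S = X \<inter> K - p ` D'"
  define Bad where "Bad = {i\<in>D'. p i \<notin> X}"
  define Gd where "Gd = {i\<in>D'. p i \<in> X}"
  have injp: "inj_on p D'" using D(3) D'(1) inj_on_subset by blast
  have injq: "inj_on q D'" using D(4) D'(1) inj_on_subset by blast
  have "Bad \<union> Gd = D'" "Bad \<inter> Gd = {}" unfolding Bad_def Gd_def by auto
  then have cBG: "card Bad + card Gd = f + 1" using D' 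
    by (metis card_Un_disjoint finite_Un)
  have "X \<inter> K \<inter> p ` D' = p ` Gd" unfolding Gd_def using pq D'(1) by auto
  moreover have "card (p ` Gd) = card Gd"
    using injp unfolding Gd_def by (intro card_image) (auto intro: inj_on_subset)
  ultimately have "card S = card (X \<inter> K) - card Gd"
    unfolding S_def using fin by (metis Diff_Int2 card_Diff_subset_Int finite_Int)
  then have "card Bad \<le> card S" using cBG XK by linarith
  moreover have "finite Bad" unfolding Bad_def using D' by auto
  moreover have "finite S" unfolding S_def using fin by auto
  ultimately obtain g where g: "g ` Bad \<subseteq> S" "inj_on g Bad"
    using card_le_inj by metis
  define path where "path i = (if p i \<in> X then [] else [g i]) @ p i #
      (if q i = y then [y] else [q i, y])" for i
  have setpath: "set (path i) = (if p i \<in> X then {} else {g i}) \<union> {p i} \<union>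
      (if q i = y then {} else {q i}) \<union> {y}" for i
    unfolding path_def by auto
  have gS: "i \<in> D' \<Longrightarrow> p i \<notin> X \<Longrightarrow> g i \<in> X \<and> g i \<in> K \<and> g i \<notin> p ` D'" for i
    using g(1) unfolding Bad_def S_def by auto
  have pqi: "i \<in> D' \<Longrightarrow> p i \<in> K \<and> p i \<notin> F \<and> q i \<in> L \<and> q i \<notin> F \<and> (p i, q i) \<in> E" for i
    using pq D'(1) by auto
  have yK: "y \<notin> K" using y KL by auto
  have okpath: "XY_path E X y (path i) \<and> set (path i) \<inter> F = {}" if i: "i \<in> D'" for i
  proof -
    have a: "p i \<in> K" "p i \<notin> F" "q i \<in> L" "q i \<notin> F" "(p i, q i) \<in> E" using pqi[OF i] by auto
    have pqy: "p i \<noteq> q i" "p i \<noteq> y" using a KL y by auto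
    have E1: "(q i, y) \<in> E" if "q i \<noteq> y" using EL a y that by auto
    have E2: "(p i, y) \<in> E" if "q i = y" using a that by auto
    show ?thesis
    proof (cases "p i \<in> X")
      case True
      then show ?thesis unfolding path_def XY_path_def using a pqy E1 E2 y XF
        by (cases "q i = y") auto
    next
      case False
      note gg = gS[OF i False]
      have "g i \<noteq> p i" using gg False by auto
      moreover have "(g i, p i) \<in> E" using EK gg a \<open>g i \<noteq> p i\<close> by auto
      moreover have "g i \<notin> F" using gg XF by auto
      moreover have "g i \<noteq> y" "g i \<noteq> q i" using gg a KL yK by auto
      ultimately show ?thesis unfolding path_def XY_path_def using False a pqy E1 E2 y XF gg
        by (cases "q i = y") auto
    qed
  qed
  have disj: "set (path i) \<inter> set (path j) = {y}" if ij: "i \<in> D'" "j \<in> D'" "i \<noteq> j" for i j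
  proof -
    have a: "p i \<in> K" "q i \<in> L" "p j \<in> K" "q j \<in> L" using pqi ij by auto
    have ne: "p i \<noteq> p j" "q i \<noteq> q j" using injp injq ij by (auto simp: inj_on_def)
    have gi: "p i \<notin> X \<Longrightarrow> g i \<in> K \<and> g i \<noteq> p j \<and> g i \<noteq> p i" using gS ij by auto
    have gj: "p j \<notin> X \<Longrightarrow> g j \<in> K \<and> g j \<noteq> p j \<and> g j \<noteq> p i" using gS ij by auto
    have gij: "p i \<notin> X \<Longrightarrow> p j \<notin> X \<Longrightarrow> g i \<noteq> g j"
      using g(2) ij unfolding Bad_def inj_on_def by auto
    show ?thesis unfolding setpath using a ne gi gj gij KL yK y
      by (auto split: if_splits)
  qed
  have injpath: "inj_on path D'"
  proof (rule inj_onI)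
    fix i j assume ij: "i \<in> D'" "j \<in> D'" "path i = path j"
    show "i = j"
    proof (rule ccontr)
      assume "i \<noteq> j"
      then have "set (path i) \<inter> set (path j) = {y}" using disj ij(1,2) by blast
      moreover have "p i \<in> set (path i)" unfolding setpath by auto
      ultimately have "p i = y" using ij(3) by auto
      then show False using pqi[OF ij(1)] yK by auto
    qed
  qed
  have "card (path ` D') = f + 1" using card_image[OF injpath] D' by simp
  moreover have "\<forall>a\<in>path ` D'. \<forall>b\<in>path ` D'. a \<noteq> b \<longrightarrow> set a \<inter> set b = {y}"
  proof (intro ballI impI)
    fix a b assume "a \<in> path ` D'" "b \<in> path ` D'" "a \<noteq> b"
    then obtain i j where "i \<in> D'" "j \<in> D'" "a = path i" "b = path j" "i \<noteq> j" by blast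
    then show "set a \<inter> set b = {y}" using disj by blast
  qed
  ultimately show ?thesis unfolding good_def using okpath D'(3)
    by (intro exI[of _ "path ` D'"]) auto
qed

lemma reach_helper:
  assumes net: "two_clique_network f V E u w"
    and XF: "X \<inter> F = {}" and Y: "Y \<subseteq> V" "Y \<inter> X = {}" "Y \<inter> F = {}"
    and cond: "(card (X \<inter> u ` {1..3*f+1}) \<ge> f+1 \<and> card (X \<inter> w ` {1..3*f+1}) \<ge> f+1)
      \<or> (card (X \<inter> u ` {1..3*f+1}) \<ge> f+1 \<and>
          card {i. (1 \<le> i \<and> i \<le> 3*f div 2 \<or> i = 3*f+1) \<and> u i \<notin> F \<and> w i \<notin> F} \<ge> f+1)
      \<or> (card (X \<inter> w ` {1..3*f+1}) \<ge> f+1 \<and>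
          card {i. (3*f div 2 + 1 \<le> i \<and> i \<le> 3*f \<or> i = 3*f+1) \<and> u i \<notin> F \<and> w i \<notin> F} \<ge> f+1)"
  shows "reaches f E F X Y"
proof -
  define I where "I = {1..3*f+1}"
  define K1 where "K1 = u ` I"
  define K2 where "K2 = w ` I"
  define Ds where "Ds = {i. (1 \<le> i \<and> i \<le> 3*f div 2 \<or> i = 3*f+1) \<and> u i \<notin> F \<and> w i \<notin> F}"
  define Dt where "Dt = {i. (3*f div 2 + 1 \<le> i \<and> i \<le> 3*f \<or> i = 3*f+1) \<and> u i \<notin> F \<and> w i \<notin> F}"
  note nd = net[unfolded two_clique_network_def, folded I_def K1_def K2_def]
  have KL: "K1 \<inter> K2 = {}" "K2 \<inter> K1 = {}" using nd unfolding K1_def K2_def by auto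
  have V: "V = K1 \<union> K2" using nd unfolding K1_def K2_def by auto
  have E1: "\<forall>x\<in>K1. \<forall>z\<in>K1. x \<noteq> z \<longrightarrow> (x,z) \<in> E" using nd unfolding K1_def by blast
  have E2: "\<forall>x\<in>K2. \<forall>z\<in>K2. x \<noteq> z \<longrightarrow> (x,z) \<in> E" using nd unfolding K2_def by blast
  have DsI: "Ds \<subseteq> I" "Dt \<subseteq> I" unfolding Ds_def Dt_def I_def by auto
  have finI: "finite Ds" "finite Dt" using DsI unfolding I_def by (auto intro: finite_subset)
  have injs: "inj_on u Ds" "inj_on w Ds" "inj_on u Dt" "inj_on w Dt"
    using nd DsI inj_on_subset by metis+
  have pqs: "\<forall>i\<in>Ds. u i \<in> K1 \<and> u i \<notin> F \<and> w i \<in> K2 \<and> w i \<notin> F \<and> (u i, w i) \<in> E"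
    using nd DsI unfolding Ds_def K1_def K2_def by blast
  have pqt: "\<forall>i\<in>Dt. w i \<in> K2 \<and> w i \<notin> F \<and> u i \<in> K1 \<and> u i \<notin> F \<and> (w i, u i) \<in> E"
    using nd DsI unfolding Dt_def K1_def K2_def by blast
  have "good f E F X y" if y: "y \<in> Y" for y
  proof -
    have yy: "y \<notin> X" "y \<notin> F" "y \<in> K1 \<or> y \<in> K2" using y Y V by auto
    have c: "(card (X \<inter> K1) \<ge> f+1 \<and> card (X \<inter> K2) \<ge> f+1)
      \<or> (card (X \<inter> K1) \<ge> f+1 \<and> card Ds \<ge> f+1)
      \<or> (card (X \<inter> K2) \<ge> f+1 \<and> card Dt \<ge> f+1)"
      using cond unfolding K1_def K2_def Ds_def Dt_def I_def .
    show ?thesis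
    proof (cases "y \<in> K1")
      case True
      then show ?thesis using c
      proof (elim disjE conjE)
        assume "card (X \<inter> K1) \<ge> f+1" then show ?thesis
          using within[OF E1 True yy(1,2) XF] by blast
      next
        assume "card (X \<inter> K1) \<ge> f+1" then show ?thesis
          using within[OF E1 True yy(1,2) XF] by blast
      next
        assume "card (X \<inter> K2) \<ge> f+1" "card Dt \<ge> f+1"
        then show ?thesis
          using cross[OF KL(2) E2 E1 finI(2) _ injs(4) injs(3) pqt True yy(1,2) XF] by blast
      qed
    next
      case False
      then have True: "y \<in> K2" using yy by auto
      show ?thesis using c
      proof (elim disjE conjE)
        assume "card (X \<inter> K2) \<ge> f+1" then show ?thesis
          using within[OF E2 True yy(1,2) XF] by blast
      next
        assume "card (X \<inter> K1) \<ge> f+1" "card Ds \<ge> f+1"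
        then show ?thesis
          using cross[OF KL(1) E1 E2 finI(1) _ injs(1) injs(2) pqs True yy(1,2) XF] by blast
      next
        assume "card (X \<inter> K2) \<ge> f+1" then show ?thesis
          using within[OF E2 True yy(1,2) XF] by blast
      qed
    qed
  qed
  then show ?thesis unfolding reaches_def good_def by blast
qed

theorem lemma9:
  fixes f :: nat and V :: "'a set" and E :: "('a \<times> 'a) set" and u w :: "nat \<Rightarrow> 'a"
    and A B F :: "'a set"
  assumes "f > 0" and "even f"
    and "two_clique_network f V E u w"
    and "A \<union> B \<union> F = V" and "A \<inter> B = {}" and "A \<inter> F = {}" and "B \<inter> F = {}"
    and "A \<noteq> {}" and "B \<noteq> {}" and "card F \<le> f"
  shows "reaches f E F A B \<or> reaches f E F B A"
proof -
  note net = assms(3)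
  define I where "I = {1..3*f+1}"
  define K1 where "K1 = u ` I"
  define K2 where "K2 = w ` I"
  define Ds where "Ds = {i. (1 \<le> i \<and> i \<le> 3*f div 2 \<or> i = 3*f+1) \<and> u i \<notin> F \<and> w i \<notin> F}"
  define Dt where "Dt = {i. (3*f div 2 + 1 \<le> i \<and> i \<le> 3*f \<or> i = 3*f+1) \<and> u i \<notin> F \<and> w i \<notin> F}"
  note nd = net[unfolded two_clique_network_def, folded I_def K1_def K2_def]
  have inju: "inj_on u I" using nd by (rule conjunct1)
  have injw: "inj_on w I" using nd[THEN conjunct2] by (rule conjunct1)
  have KL: "K1 \<inter> K2 = {}" using nd[THEN conjunct2, THEN conjunct2, THEN conjunct1]
    unfolding K1_def K2_def .
  have V: "V = K1 \<union> K2" using nd[THEN conjunct2, THEN conjunct2, THEN conjunct2, THEN conjunct1]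
    unfolding K1_def K2_def .
  have finI: "finite I" unfolding I_def by simp
  have cK: "card K1 = 3*f+1" "card K2 = 3*f+1"
    unfolding K1_def K2_def using card_image[OF inju] card_image[OF injw] unfolding I_def by auto
  have finK: "finite K1" "finite K2" unfolding K1_def K2_def using finI by auto
  have FV: "F \<subseteq> K1 \<union> K2" using assms(4) V by auto
  have cF: "card (F \<inter> K1) + card (F \<inter> K2) \<le> f"
  proof -
    have "F = (F \<inter> K1) \<union> (F \<inter> K2)" using FV by auto
    then have "card F = card (F \<inter> K1) + card (F \<inter> K2)"
      using KL finK card_Un_disjoint[of "F \<inter> K1" "F \<inter> K2"] by auto
    then show ?thesis using assms(10) by simp
  qed
  have split1: "card (A \<inter> K1) \<ge> f+1 \<or> card (B \<inter> K1) \<ge> f+1"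
  proof -
    have "K1 = (A \<inter> K1) \<union> (B \<inter> K1) \<union> (F \<inter> K1)" using assms(4) V by auto
    then have "card K1 = card ((A \<inter> K1) \<union> (B \<inter> K1) \<union> (F \<inter> K1))" by (rule arg_cong)
    then have "card K1 \<le> card (A \<inter> K1) + card (B \<inter> K1) + card (F \<inter> K1)"
      using card_Un_le[of "A \<inter> K1 \<union> B \<inter> K1" "F \<inter> K1"] card_Un_le[of "A \<inter> K1" "B \<inter> K1"] by linarith
    then show ?thesis using cK cF by linarith
  qed
  have split2: "card (A \<inter> K2) \<ge> f+1 \<or> card (B \<inter> K2) \<ge> f+1"
  proof -
    have "K2 = (A \<inter> K2) \<union> (B \<inter> K2) \<union> (F \<inter> K2)" using assms(4) V by auto
    then have "card K2 = card ((A \<inter> K2) \<union> (B \<inter> K2) \<union> (F \<inter> K2))" by (rule arg_cong)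
    then have "card K2 \<le> card (A \<inter> K2) + card (B \<inter> K2) + card (F \<inter> K2)"
      using card_Un_le[of "A \<inter> K2 \<union> B \<inter> K2" "F \<inter> K2"] card_Un_le[of "A \<inter> K2" "B \<inter> K2"] by linarith
    then show ?thesis using cK cF by linarith
  qed
  have splitD: "card Ds \<ge> f+1 \<or> card Dt \<ge> f+1"
  proof -
    define Gd where "Gd = {i\<in>I. u i \<notin> F \<and> w i \<notin> F}"
    define Ku where "Ku = {i\<in>I. u i \<in> F}"
    define Kw where "Kw = {i\<in>I. w i \<in> F}"
    have "Ds \<union> Dt = Gd" unfolding Ds_def Dt_def Gd_def I_def by auto
    moreover have "finite Ds" "finite Dt" unfolding Ds_def Dt_def
      by (rule finite_subset[of _ "{..3*f+1}"], auto)+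
    ultimately have s1: "card Gd \<le> card Ds + card Dt" by (metis card_Un_le)
    have c1: "card Ku \<le> card (F \<inter> K1)"
      by (rule card_inj_on_le[of u]) (use inju injw finK in \<open>auto simp: Ku_def K1_def intro: inj_on_subset\<close>)
    have c2: "card Kw \<le> card (F \<inter> K2)"
      by (rule card_inj_on_le[of w]) (use inju injw finK in \<open>auto simp: Kw_def K2_def intro: inj_on_subset\<close>)
    have "I = Gd \<union> (Ku \<union> Kw)" unfolding Gd_def Ku_def Kw_def by auto
    then have "card I = card (Gd \<union> (Ku \<union> Kw))" by (rule arg_cong)
    then have "card I \<le> card Gd + card (F \<inter> K1) + card (F \<inter> K2)"
      using card_Un_le[of Gd "Ku \<union> Kw"] card_Un_le[of Ku Kw] c1 c2 by linarith
    moreover have "card I = 3*f+1" unfolding I_def by simp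
    ultimately show ?thesis using s1 cF by linarith
  qed
  have hA: "reaches f E F A B" if "(card (A \<inter> K1) \<ge> f+1 \<and> card (A \<inter> K2) \<ge> f+1)
      \<or> (card (A \<inter> K1) \<ge> f+1 \<and> card Ds \<ge> f+1)
      \<or> (card (A \<inter> K2) \<ge> f+1 \<and> card Dt \<ge> f+1)"
  proof (rule reach_helper[OF net assms(6)])
    show "B \<subseteq> V" "B \<inter> A = {}" "B \<inter> F = {}" using assms(4,5,7) by auto
    show "(card (A \<inter> u ` {1..3*f+1}) \<ge> f+1 \<and> card (A \<inter> w ` {1..3*f+1}) \<ge> f+1)
      \<or> (card (A \<inter> u ` {1..3*f+1}) \<ge> f+1 \<and>
          card {i. (1 \<le> i \<and> i \<le> 3*f div 2 \<or> i = 3*f+1) \<and> u i \<notin> F \<and> w i \<notin> F} \<ge> f+1)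
      \<or> (card (A \<inter> w ` {1..3*f+1}) \<ge> f+1 \<and>
          card {i. (3*f div 2 + 1 \<le> i \<and> i \<le> 3*f \<or> i = 3*f+1) \<and> u i \<notin> F \<and> w i \<notin> F} \<ge> f+1)"
      using that unfolding K1_def K2_def Ds_def Dt_def I_def .
  qed
  have hB: "reaches f E F B A" if "(card (B \<inter> K1) \<ge> f+1 \<and> card (B \<inter> K2) \<ge> f+1)
      \<or> (card (B \<inter> K1) \<ge> f+1 \<and> card Ds \<ge> f+1)
      \<or> (card (B \<inter> K2) \<ge> f+1 \<and> card Dt \<ge> f+1)"
  proof (rule reach_helper[OF net assms(7)])
    show "A \<subseteq> V" "A \<inter> B = {}" "A \<inter> F = {}" using assms(4,5,6) by auto
    show "(card (B \<inter> u ` {1..3*f+1}) \<ge> f+1 \<and> card (B \<inter> w ` {1..3*f+1}) \<ge> f+1)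
      \<or> (card (B \<inter> u ` {1..3*f+1}) \<ge> f+1 \<and>
          card {i. (1 \<le> i \<and> i \<le> 3*f div 2 \<or> i = 3*f+1) \<and> u i \<notin> F \<and> w i \<notin> F} \<ge> f+1)
      \<or> (card (B \<inter> w ` {1..3*f+1}) \<ge> f+1 \<and>
          card {i. (3*f div 2 + 1 \<le> i \<and> i \<le> 3*f \<or> i = 3*f+1) \<and> u i \<notin> F \<and> w i \<notin> F} \<ge> f+1)"
      using that unfolding K1_def K2_def Ds_def Dt_def I_def .
  qed
  show ?thesis using split1 split2 splitD hA hB by blast
qed

end
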